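(* If $\mathcal{R}_{0}<1$, then the disease-free equilibrium $P^{\ast}=\left(\frac{\mu N^{2}}{p+\mu N},0,0,0,\frac{pN}{p+\mu N}\right)$ is globally asymptotically stable in $\Sigma=\{(S,E,I,R,V)\in\mathbb{R}_{+}^{5}:S+E+I+R+V=N\}$, i.e. every solution of the system below with initial datum in $\Sigma$ converges to $P^{\ast}$ as $t\to+\infty$ (and $P^{\ast}$ is stable).
   Context: Consider the SEIR model with vaccination and equal birth/death rate $\mu>0$: $S'=\mu N-\frac{\beta}{N}S(1-\rho)I-\frac{S}{N}p-\mu S$, $E'=\frac{\beta}{N}S(1-\rho)I-\sigma E-\mu E$, $I'=\sigma E-\gamma I-\mu I$, $R'=\gamma I-\mu R$, $V'=\frac{S}{N}p-\mu V$, where $N>0$ is the (constant) total population, $\beta,\sigma,\gamma>0$, $0<\rho<1$, the numbers of people vaccinated per day with the first and second dose are constants $\Delta_{1},\Delta_{2}\ge0$, the immunity fractions after each dose are $\pi_{1},\pi_{2}$, and $p=\Delta_{1}\pi_{1}+\Delta_{2}(\pi_{2}-\pi_{1})\ge0$. The set $\Sigma$ is positively invariant (nonnegative initial data give nonnegative solutions with $S+E+I+R+V=N$). The reproductive number is $\mathcal{R}_{0}=\frac{\mu N\sigma\beta(1-\rho)}{(\sigma+\mu)(\gamma+\mu)(p+\mu N)}$ (denoted $R_0$ in the paper, not to be confused with the initial value of $R$). *)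

theory Defs
  imports "HOL-Analysis.Analysis"
begin

type_synonym state = "real \<times> real \<times> real \<times> real \<times> real"
  (* (S, E, I, R, V); dist on this product type is the Euclidean distance *)

definition vacc_p :: "real \<Rightarrow> real \<Rightarrow> real \<Rightarrow> real \<Rightarrow> real" where
  "vacc_p \<Delta>1 \<Delta>2 \<pi>1 \<pi>2 = \<Delta>1 * \<pi>1 + \<Delta>2 * (\<pi>2 - \<pi>1)"

definition seirv_rhs ::
  "real \<Rightarrow> real \<Rightarrow> real \<Rightarrow> real \<Rightarrow> real \<Rightarrow> real \<Rightarrow> real \<Rightarrow> state \<Rightarrow> state" where
  "seirv_rhs \<mu> \<beta> \<sigma> \<gamma> \<rho> N p x =
     (case x of (S, E, I, R, V) \<Rightarrow>
       (\<mu> * N - \<beta> / N * S * (1 - \<rho>) * I - S / N * p - \<mu> * S,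
        \<beta> / N * S * (1 - \<rho>) * I - \<sigma> * E - \<mu> * E,
        \<sigma> * E - \<gamma> * I - \<mu> * I,
        \<gamma> * I - \<mu> * R,
        S / N * p - \<mu> * V))"

definition seirv_solution ::
  "real \<Rightarrow> real \<Rightarrow> real \<Rightarrow> real \<Rightarrow> real \<Rightarrow> real \<Rightarrow> real \<Rightarrow> (real \<Rightarrow> state) \<Rightarrow> bool" where
  "seirv_solution \<mu> \<beta> \<sigma> \<gamma> \<rho> N p x \<longleftrightarrow>
     (\<forall>t\<ge>0. (x has_vector_derivative seirv_rhs \<mu> \<beta> \<sigma> \<gamma> \<rho> N p (x t)) (at t within {0..}))"

definition Sigma_set :: "real \<Rightarrow> state set" where
  "Sigma_set N = {(S, E, I, R, V). S \<ge> 0 \<and> E \<ge> 0 \<and> I \<ge> 0 \<and> R \<ge> 0 \<and> V \<ge> 0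
                      \<and> S + E + I + R + V = N}"

definition R0 :: "real \<Rightarrow> real \<Rightarrow> real \<Rightarrow> real \<Rightarrow> real \<Rightarrow> real \<Rightarrow> real \<Rightarrow> real" where
  "R0 \<mu> \<beta> \<sigma> \<gamma> \<rho> N p =
     \<mu> * N * \<sigma> * \<beta> * (1 - \<rho>) / ((\<sigma> + \<mu>) * (\<gamma> + \<mu>) * (p + \<mu> * N))"

definition DFE :: "real \<Rightarrow> real \<Rightarrow> real \<Rightarrow> state" where
  "DFE \<mu> N p = (\<mu> * N^2 / (p + \<mu> * N), 0, 0, 0, p * N / (p + \<mu> * N))"

end

theory Submission
  imports Defs
begin


lemma vd_comps:
  fixes x :: "real \<Rightarrow> state"
  assumes "(x has_vector_derivative (a,b,c,d,e)) F"
  shows "((\<lambda>t. fst (x t)) has_real_derivative a) F"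
    "((\<lambda>t. fst (snd (x t))) has_real_derivative b) F"
    "((\<lambda>t. fst (snd (snd (x t)))) has_real_derivative c) F"
    "((\<lambda>t. fst (snd (snd (snd (x t))))) has_real_derivative d) F"
    "((\<lambda>t. snd (snd (snd (snd (x t))))) has_real_derivative e) F"
proof -
  have D: "(x has_derivative (\<lambda>h. h *\<^sub>R (a,b,c,d,e))) F"
    using assms by (simp add: has_vector_derivative_def)
  show "((\<lambda>t. fst (x t)) has_real_derivative a) F"
    using has_derivative_fst[OF D] unfolding has_field_derivative_def by (rule has_derivative_eq_rhs) (auto simp: fun_eq_iff)
  show "((\<lambda>t. fst (snd (x t))) has_real_derivative b) F"
    using has_derivative_fst[OF has_derivative_snd[OF D]] unfolding has_field_derivative_def by (rule has_derivative_eq_rhs) (auto simp: fun_eq_iff)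
  show "((\<lambda>t. fst (snd (snd (x t)))) has_real_derivative c) F"
    using has_derivative_fst[OF has_derivative_snd[OF has_derivative_snd[OF D]]] unfolding has_field_derivative_def by (rule has_derivative_eq_rhs) (auto simp: fun_eq_iff)
  show "((\<lambda>t. fst (snd (snd (snd (x t))))) has_real_derivative d) F"
    using has_derivative_fst[OF has_derivative_snd[OF has_derivative_snd[OF has_derivative_snd[OF D]]]] unfolding has_field_derivative_def by (rule has_derivative_eq_rhs) (auto simp: fun_eq_iff)
  show "((\<lambda>t. snd (snd (snd (snd (x t))))) has_real_derivative e) F"
    using has_derivative_snd[OF has_derivative_snd[OF has_derivative_snd[OF has_derivative_snd[OF D]]]] unfolding has_field_derivative_def by (rule has_derivative_eq_rhs) (auto simp: fun_eq_iff)
qed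

lemma deriv_interior:
  assumes "(f has_real_derivative D) (at t within {a..})" "a < t"
  shows "(f has_real_derivative D) (at t)"
  using assms at_within_interior[of t "{a..}"] by simp

lemma deriv_mono_dec:
  fixes h :: "real \<Rightarrow> real"
  assumes d: "\<And>t. t \<ge> t0 \<Longrightarrow> (h has_real_derivative h' t) (at t within {t0..})"
    and n: "\<And>t. t \<ge> t0 \<Longrightarrow> h' t \<le> 0" and t: "t0 \<le> t"
  shows "h t \<le> h t0"
proof (rule DERIV_nonpos_imp_decreasing_open[OF t])
  show "\<exists>y. (h has_real_derivative y) (at s) \<and> y \<le> 0" if "t0 < s" "s < t" for s
    using d[of s] n[of s] that deriv_interior by force
  have "continuous_on {t0..} h"
    using d by (intro has_derivative_continuous_on[where f'="\<lambda>s. (*) (h' s)"])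
       (auto simp: has_field_derivative_def)
  then show "continuous_on {t0..t} h" by (rule continuous_on_subset) auto
qed

lemma CL_upper:
  fixes f :: "real \<Rightarrow> real"
  assumes a: "a > 0"
    and d: "\<And>t. t \<ge> t0 \<Longrightarrow> (f has_real_derivative f' t) (at t within {t0..})"
    and le: "\<And>t. t \<ge> t0 \<Longrightarrow> f' t \<le> - a * f t + G" and t: "t0 \<le> t"
  shows "f t \<le> G / a + (f t0 - G / a) * exp (- a * (t - t0))"
proof -
  define h where "h s = (f s - G / a) * exp (a * (s - t0))" for s
  have hd: "(h has_real_derivative (f' s + a * f s - G) * exp (a * (s - t0))) (at s within {t0..})"
    if "s \<ge> t0" for s
    unfolding h_def
    by (rule derivative_eq_intros refl d[OF that] | use a in \<open>simp add: field_simps\<close>)+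
  have "h t \<le> h t0"
  proof (rule deriv_mono_dec[OF hd _ t])
    fix s assume "t0 \<le> s"
    then have "f' s + a * f s - G \<le> 0" using le[of s] by simp
    then show "(f' s + a * f s - G) * exp (a * (s - t0)) \<le> 0" by (simp add: mult_nonpos_nonneg)
  qed
  then have "(f t - G / a) * exp (a * (t - t0)) \<le> f t0 - G / a" by (simp add: h_def)
  then have "(f t - G / a) * exp (a * (t - t0)) * exp (- a * (t - t0)) \<le> (f t0 - G / a) * exp (- a * (t - t0))"
    by (rule mult_right_mono) simp
  then have "f t - G / a \<le> (f t0 - G / a) * exp (- a * (t - t0))"
    by (simp add: mult.assoc exp_add[symmetric])
  then show ?thesis by simp
qed

lemma first_hit:
  fixes y :: "nat \<Rightarrow> real \<Rightarrow> real"
  assumes cont: "\<And>i. i<n \<Longrightarrow> continuous_on {0..T} (y i)"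
    and init: "\<And>i. i<n \<Longrightarrow> y i 0 > 0"
    and step: "\<And>i t. i<n \<Longrightarrow> 0<t \<Longrightarrow> t\<le>T \<Longrightarrow> (\<forall>j<n. y j t \<ge> 0) \<Longrightarrow> y i t \<le> 0
          \<Longrightarrow> \<exists>d>0. \<forall>h>0. h<d \<longrightarrow> y i (t-h) < y i t"
    and i: "i<n" and t: "t\<in>{0..T}"
  shows "y i t > 0"
proof (rule ccontr)
  assume nt: "\<not> y i t > 0"
  define Z where "Z = (\<Union>j\<in>{..<n}. {0..T} \<inter> y j -` {..0})"
  have cZ: "closed Z" unfolding Z_def
    by (intro closed_UN finite_lessThan ballI continuous_closed_preimage cont) auto
  have tZ: "t \<in> Z" using nt i t by (force simp: Z_def)
  have bZ: "bdd_below Z" by (rule bdd_belowI[of _ 0]) (auto simp: Z_def)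
  define t0 where "t0 = Inf Z"
  have t0Z: "t0 \<in> Z" unfolding t0_def using closed_contains_Inf[OF _ bZ cZ] tZ by blast
  then obtain i0 where i0: "i0 < n" "y i0 t0 \<le> 0" and t0r: "0 \<le> t0" "t0 \<le> T" by (auto simp: Z_def)
  have before: "y j s > 0" if "j < n" "0 \<le> s" "s < t0" for j s
  proof (rule ccontr)
    assume "\<not> y j s > 0"
    then have "s \<in> Z" using that t0r by (force simp: Z_def)
    then have "t0 \<le> s" unfolding t0_def by (rule cInf_lower[OF _ bZ])
    then show False using that by simp
  qed
  have t0pos: "t0 > 0"
  proof (rule ccontr)
    assume "\<not> t0 > 0" then have "t0 = 0" using t0r by simp
    then show False using init[OF i0(1)] i0(2) by simp
  qed
  have allnn: "\<forall>j<n. y j t0 \<ge> 0"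
  proof (intro allI impI, rule ccontr)
    fix j assume j: "j < n" and neg: "\<not> 0 \<le> y j t0"
    from cont[OF j] t0r have "\<exists>d>0. \<forall>x'\<in>{0..T}. dist x' t0 < d \<longrightarrow> dist (y j x') (y j t0) < - y j t0"
      unfolding continuous_on_iff using neg by auto
    then obtain d where d: "d > 0" "\<forall>x'\<in>{0..T}. dist x' t0 < d \<longrightarrow> dist (y j x') (y j t0) < - y j t0" by auto
    define s where "s = max 0 (t0 - d/2)"
    have s: "0 \<le> s" "s < t0" "s \<in> {0..T}" "dist s t0 < d" using d t0pos t0r by (auto simp: s_def dist_real_def)
    then have "dist (y j s) (y j t0) < - y j t0" using d by auto
    then have "y j s < 0" by (auto simp: dist_real_def)
    then show False using before[OF j s(1,2)] by simp
  qed
  obtain d where d: "d > 0" "\<forall>h>0. h<d \<longrightarrow> y i0 (t0-h) < y i0 t0"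
    using step[OF i0(1) t0pos t0r(2) allnn i0(2)] by blast
  define h where "h = min (d/2) (t0/2)"
  have "h > 0" "h < d" using d t0pos by (auto simp: h_def)
  then have "y i0 (t0-h) < y i0 t0" using d by auto
  moreover have "y i0 (t0-h) > 0" using before[OF i0(1)] t0pos \<open>h>0\<close> by (auto simp: h_def)
  ultimately show False using i0(2) by simp
qed

lemma cont_of_deriv:
  assumes "\<And>t. t \<ge> 0 \<Longrightarrow> (f has_real_derivative f' t) (at t within {0..})"
  shows "continuous_on {0..T} f"
proof -
  have "continuous_on {0..} f"
    using assms by (intro has_derivative_continuous_on[where f'="\<lambda>s. (*) (f' s)"])
       (auto simp: has_field_derivative_def)
  then show ?thesis by (rule continuous_on_subset) auto
qed

lemma bound_on:
  fixes f :: "real \<Rightarrow> real"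
  assumes "continuous_on {0..T} f"
  obtains M where "\<And>s. s \<in> {0..T} \<Longrightarrow> \<bar>f s\<bar> \<le> M"
proof -
  have "bounded (f ` {0..T})"
    by (rule compact_imp_bounded[OF compact_continuous_image[OF assms compact_Icc]])
  then obtain M where "\<forall>x\<in>{0..T}. \<bar>f x\<bar> \<le> M" unfolding bounded_real by auto
  then show ?thesis using that by blast
qed

lemma prod_lb:
  fixes S I g M :: real
  assumes "-g \<le> S" "-g \<le> I" "\<bar>S\<bar> \<le> M" "\<bar>I\<bar> \<le> M" "g \<ge> 0"
  shows "S * I \<ge> - M * g"
proof (cases "S \<ge> 0")
  case True
  show ?thesis
  proof (cases "I \<ge> 0")
    case True with \<open>S \<ge> 0\<close> have "S * I \<ge> 0" by simp
    moreover have "M * g \<ge> 0" using assms by (simp add: mult_nonneg_nonneg order_trans[OF abs_ge_zero])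
    ultimately show ?thesis by linarith
  next
    case False
    have "S * (-I) \<le> M * g" using assms True False by (intro mult_mono) auto
    then show ?thesis by simp
  qed
next
  case False
  show ?thesis
  proof (cases "I \<ge> 0")
    case True
    have "I * (-S) \<le> M * g" using assms True False by (intro mult_mono) auto
    then show ?thesis by (simp add: mult.commute)
  next
    case False
    with \<open>\<not> S \<ge> 0\<close> have "S * I \<ge> 0" by (simp add: mult_nonpos_nonpos)
    moreover have "M * g \<ge> 0" using assms by (simp add: mult_nonneg_nonneg order_trans[OF abs_ge_zero])
    ultimately show ?thesis by linarith
  qed
qed

lemma nonneg_of_eps:
  fixes f c :: real
  assumes "\<And>e. e > 0 \<Longrightarrow> f + e * c > 0" "c > 0"
  shows "f \<ge> 0"
proof (rule ccontr)
  assume "\<not> f \<ge> 0"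
  then have "- f / (2 * c) > 0" using assms by (intro divide_pos_pos) auto
  then have "f + (- f / (2 * c)) * c > 0" by (rule assms(1))
  then show False using \<open>\<not> f \<ge> 0\<close> assms(2) by (simp add: field_simps)
qed

lemma positivity:
  fixes S E I R V :: "real \<Rightarrow> real"
  assumes pars: "\<mu> > 0" "N > 0" "b > 0" "\<sigma> > 0" "\<gamma> > 0" "q \<ge> 0"
  and dS: "\<And>t. t \<ge> 0 \<Longrightarrow> (S has_real_derivative (\<mu>*N - b*S t*I t - q*S t - \<mu>*S t)) (at t within {0..})"
  and dE: "\<And>t. t \<ge> 0 \<Longrightarrow> (E has_real_derivative (b*S t*I t - (\<sigma>+\<mu>)*E t)) (at t within {0..})"
  and dI: "\<And>t. t \<ge> 0 \<Longrightarrow> (I has_real_derivative (\<sigma>*E t - (\<gamma>+\<mu>)*I t)) (at t within {0..})"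
  and dR: "\<And>t. t \<ge> 0 \<Longrightarrow> (R has_real_derivative (\<gamma>*I t - \<mu>*R t)) (at t within {0..})"
  and dV: "\<And>t. t \<ge> 0 \<Longrightarrow> (V has_real_derivative (q*S t - \<mu>*V t)) (at t within {0..})"
  and init: "S 0 \<ge> 0" "E 0 \<ge> 0" "I 0 \<ge> 0" "R 0 \<ge> 0" "V 0 \<ge> 0"
  and t: "t \<ge> 0"
  shows "S t \<ge> 0 \<and> E t \<ge> 0 \<and> I t \<ge> 0 \<and> R t \<ge> 0 \<and> V t \<ge> 0"
proof -
  define T where "T = t + 1"
  have cS: "continuous_on {0..T} S" by (rule cont_of_deriv[OF dS])
  have cE: "continuous_on {0..T} E" by (rule cont_of_deriv[OF dE])
  have cI: "continuous_on {0..T} I" by (rule cont_of_deriv[OF dI])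
  have cR: "continuous_on {0..T} R" by (rule cont_of_deriv[OF dR])
  have cV: "continuous_on {0..T} V" by (rule cont_of_deriv[OF dV])
  obtain M1 where M1: "\<And>s. s \<in> {0..T} \<Longrightarrow> \<bar>S s\<bar> \<le> M1" using bound_on[OF cS] by blast
  obtain M2 where M2: "\<And>s. s \<in> {0..T} \<Longrightarrow> \<bar>I s\<bar> \<le> M2" using bound_on[OF cI] by blast
  define M where "M = max 0 (max M1 M2)"
  have MS: "\<bar>S s\<bar> \<le> M" "\<bar>I s\<bar> \<le> M" if "s \<in> {0..T}" for s
    using M1[OF that] M2[OF that] by (auto simp: M_def)
  have M0: "M \<ge> 0" by (simp add: M_def)
  define lam where "lam = b*M + \<sigma> + \<gamma> + q + 1"
  have lamM: "lam > b * M" using pars M0 by (simp add: lam_def)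
  have main: "\<forall>i<5. \<forall>s\<in>{0..T}. ([S,E,I,R,V] ! i) s + e * exp (lam * s) > 0" if e: "e > 0" for e
  proof (intro allI impI ballI)
    fix i s assume i: "i < (5::nat)" and s: "s \<in> {0..T}"
    define y where "y = (\<lambda>i s. ([S,E,I,R,V] ! i) s + e * exp (lam * s))"
    have dg: "((\<lambda>s. e * exp (lam * s)) has_real_derivative e * exp (lam * s) * lam) (at s within X)" for s X
      by (auto intro!: derivative_eq_intros)
    show "y i s > 0"
    proof (rule first_hit[where n=5 and T=T, OF _ _ _ i s])
      fix j assume "j < (5::nat)"
      then have "j = 0 \<or> j = 1 \<or> j = 2 \<or> j = 3 \<or> j = 4" by arith
      then show "continuous_on {0..T} (y j)" unfolding y_def
        using cS cE cI cR cV by (elim disjE) (auto intro!: continuous_intros)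
    next
      fix j assume "j < (5::nat)"
      then have "j = 0 \<or> j = 1 \<or> j = 2 \<or> j = 3 \<or> j = 4" by arith
      then show "y j 0 > 0" unfolding y_def
        using init e by (elim disjE) (auto intro!: add_nonneg_pos)
    next
      fix j r assume j: "j < (5::nat)" and r: "0 < r" "r \<le> T" and nn: "\<forall>k<5. y k r \<ge> 0"
        and le: "y j r \<le> 0"
      define g where "g = e * exp (lam * r)"
      have g: "g > 0" using e by (simp add: g_def)
      have rr: "r \<in> {0..T}" using r by simp
      have lb: "S r \<ge> -g" "E r \<ge> -g" "I r \<ge> -g" "R r \<ge> -g" "V r \<ge> -g"
        using nn[rule_format, of 0] nn[rule_format, of 1] nn[rule_format, of 2]
          nn[rule_format, of 3] nn[rule_format, of 4]
        by (auto simp: y_def g_def numeral_eq_Suc)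
      have pos_step: "\<exists>d>0. \<forall>h>0. h<d \<longrightarrow> F (r-h) + e * exp (lam * (r-h)) < F r + e * exp (lam * r)"
        if "\<And>t. t \<ge> 0 \<Longrightarrow> (F has_real_derivative F' t) (at t within {0..})" "F' r + g * lam > 0"
        for F F'
      proof -
        have "((\<lambda>s. F s + e * exp (lam * s)) has_real_derivative F' r + e * exp (lam * r) * lam) (at r within {0..})"
          using that(1)[of r] r by (intro DERIV_add dg) auto
        then have "((\<lambda>s. F s + e * exp (lam * s)) has_real_derivative F' r + e * exp (lam * r) * lam) (at r)"
          using r by (intro deriv_interior) auto
        from DERIV_pos_inc_left[OF this] that(2) show ?thesis by (simp add: g_def)
      qed
      have glam: "g * lam = g*b*M + g*\<sigma> + g*\<gamma> + g*q + g" by (simp add: lam_def algebra_simps)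
      have gbM: "g * b * M \<ge> 0" using g pars M0 by simp
      have IM: "b * g * I r \<ge> - (g * b * M)"
      proof -
        have "I r \<ge> - M" using MS(2)[OF rr] by simp
        then have "(b * g) * I r \<ge> (b * g) * (- M)" using g pars by (intro mult_left_mono) auto
        then show ?thesis by (simp add: algebra_simps)
      qed
      have SIM: "b * S r * I r \<ge> - (g * b * M)"
      proof -
        have "S r * I r \<ge> - M * g" using lb MS[OF rr] g by (intro prod_lb) auto
        then have "b * (S r * I r) \<ge> b * (- M * g)" using pars by (intro mult_left_mono) auto
        then show ?thesis by (simp add: algebra_simps)
      qed
      have sE: "\<sigma> * E r \<ge> - (g * \<sigma>)" using lb pars mult_left_mono[of "-g" "E r" \<sigma>] by (simp add: algebra_simps)
      have gI: "\<gamma> * I r \<ge> - (g * \<gamma>)" using lb pars mult_left_mono[of "-g" "I r" \<gamma>] by (simp add: algebra_simps)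
      have qS: "q * S r \<ge> - (g * q)" using lb pars mult_left_mono[of "-g" "S r" q] by (simp add: algebra_simps)
      have gmu: "g * \<mu> > 0" "\<mu> * N > 0" "g * q \<ge> 0" "\<mu> * g > 0" "N * \<mu> > 0" "q * g \<ge> 0"
        "g * (q * 2) \<ge> 0" "\<gamma> * g > 0" "\<sigma> * g > 0" "g * \<gamma> > 0" "g * \<sigma> > 0" using g pars by auto
      from j have "j = 0 \<or> j = 1 \<or> j = 2 \<or> j = 3 \<or> j = 4" by arith
      then show "\<exists>d>0. \<forall>h>0. h<d \<longrightarrow> y j (r-h) < y j r"
      proof (elim disjE)
        assume j0: "j = 0"
        have Sr: "S r = - g" using lb le j0 by (simp add: y_def g_def)
        have "(\<mu>*N - b*S r*I r - q*S r - \<mu>*S r) + g * lam > 0"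
        proof -
          have "(\<mu>*N - b*S r*I r - q*S r - \<mu>*S r) + g * lam = \<mu>*N + b*g*I r + q*g + \<mu>*g + g*lam" unfolding Sr by (simp add: algebra_simps)
          then show ?thesis using IM gbM glam gmu g by linarith
        qed
        from pos_step[OF dS this] show ?thesis using j0 by (simp add: y_def)
      next
        assume j1: "j = 1"
        have Er: "E r = - g" using lb le j1 by (simp add: y_def g_def)
        have "(b*S r*I r - (\<sigma>+\<mu>)*E r) + g * lam > 0"
        proof -
          have "(b*S r*I r - (\<sigma>+\<mu>)*E r) + g * lam = b*S r*I r + \<sigma>*g + \<mu>*g + g*lam" unfolding Er by (simp add: algebra_simps)
          then show ?thesis using SIM gbM glam gmu g by linarith
        qed
        from pos_step[OF dE this] show ?thesis using j1 by (simp add: y_def)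
      next
        assume j2: "j = 2"
        have Ir: "I r = - g" using lb le j2 by (simp add: y_def g_def numeral_eq_Suc)
        have "(\<sigma>*E r - (\<gamma>+\<mu>)*I r) + g * lam > 0"
        proof -
          have "(\<sigma>*E r - (\<gamma>+\<mu>)*I r) + g * lam = \<sigma>*E r + \<gamma>*g + \<mu>*g + g*lam" unfolding Ir by (simp add: algebra_simps)
          then show ?thesis using sE gbM glam gmu g by linarith
        qed
        from pos_step[OF dI this] show ?thesis using j2 by (simp add: y_def numeral_eq_Suc)
      next
        assume j3: "j = 3"
        have Rr: "R r = - g" using lb le j3 by (simp add: y_def g_def numeral_eq_Suc)
        have "(\<gamma>*I r - \<mu>*R r) + g * lam > 0"
        proof -
          have "(\<gamma>*I r - \<mu>*R r) + g * lam = \<gamma>*I r + \<mu>*g + g*lam" unfolding Rr by (simp add: algebra_simps)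
          then show ?thesis using gI gbM glam gmu g by linarith
        qed
        from pos_step[OF dR this] show ?thesis using j3 by (simp add: y_def numeral_eq_Suc)
      next
        assume j4: "j = 4"
        have Vr: "V r = - g" using lb le j4 by (simp add: y_def g_def numeral_eq_Suc)
        have "(q*S r - \<mu>*V r) + g * lam > 0"
        proof -
          have "(q*S r - \<mu>*V r) + g * lam = q*S r + \<mu>*g + g*lam" unfolding Vr by (simp add: algebra_simps)
          then show ?thesis using qS gbM glam gmu g by linarith
        qed
        from pos_step[OF dV this] show ?thesis using j4 by (simp add: y_def numeral_eq_Suc)
      qed
    qed
  qed
  have tT: "t \<in> {0..T}" using t by (simp add: T_def)
  have ep: "exp (lam * t) > 0" by simp
  have m: "\<And>e i. e>0 \<Longrightarrow> i<5 \<Longrightarrow> ([S,E,I,R,V] ! i) t + e * exp (lam * t) > 0" using main tT by blast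
  have "S t \<ge> 0" using m[of _ 0] by (intro nonneg_of_eps[OF _ ep]) (auto)
  moreover have "E t \<ge> 0" using m[of _ 1] by (intro nonneg_of_eps[OF _ ep]) (auto)
  moreover have "I t \<ge> 0" using m[of _ 2] by (intro nonneg_of_eps[OF _ ep]) (auto simp: numeral_eq_Suc)
  moreover have "R t \<ge> 0" using m[of _ 3] by (intro nonneg_of_eps[OF _ ep]) (auto simp: numeral_eq_Suc)
  moreover have "V t \<ge> 0" using m[of _ 4] by (intro nonneg_of_eps[OF _ ep]) (auto simp: numeral_eq_Suc)
  ultimately show ?thesis by simp
qed



lemma lim_lin_at_top: "k > (0::real) \<Longrightarrow> filterlim (\<lambda>t. k * (t - T)) at_top at_top"
  by (intro filterlim_tendsto_pos_mult_at_top[OF tendsto_const] filterlim_tendsto_add_at_top[OF tendsto_const, of _ _ "-T", simplified] ) (auto simp: filterlim_ident)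

lemma exp_decay_lim: "k > (0::real) \<Longrightarrow> ((\<lambda>t. C * exp (- k * (t - T))) \<longlongrightarrow> 0) at_top"
proof -
  assume "k > 0"
  have "((\<lambda>t. exp (- (k * (t - T)))) \<longlongrightarrow> 0) at_top"
    by (rule filterlim_compose[OF exp_at_bot filterlim_uminus_at_top[THEN iffD1, OF lim_lin_at_top[OF \<open>k>0\<close>]]])
  then show ?thesis using tendsto_mult_right_zero[of _ at_top C] by simp
qed

lemma CL0:
  fixes f :: "real \<Rightarrow> real"
  assumes a: "a > 0" and t0: "t0 \<ge> 0"
    and d: "\<And>t. t \<ge> 0 \<Longrightarrow> (f has_real_derivative f' t) (at t within {0..})"
    and le: "\<And>t. t \<ge> t0 \<Longrightarrow> f' t \<le> - a * f t + G" and G: "G \<ge> 0" and t: "t0 \<le> t"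
  shows "f t \<le> G / a + \<bar>f t0\<bar> * exp (- a * (t - t0))"
proof -
  have "f t \<le> G / a + (f t0 - G / a) * exp (- a * (t - t0))"
  proof (rule CL_upper[OF a _ le t])
    fix s assume "t0 \<le> s"
    then show "(f has_real_derivative f' s) (at s within {t0..})"
    proof -
      have "(f has_real_derivative f' s) (at s within {0..})" using d[of s] t0 \<open>t0 \<le> s\<close> by simp
      then show ?thesis by (rule DERIV_subset) (use t0 in auto)
    qed
  qed
  also have "(f t0 - G / a) * exp (- a * (t - t0)) \<le> \<bar>f t0\<bar> * exp (- a * (t - t0))"
  proof (rule mult_right_mono)
    have "G / a \<ge> 0" using G a by simp
    then show "f t0 - G / a \<le> \<bar>f t0\<bar>" by linarith
  qed simp
  finally show ?thesis by simp
qed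

lemma lin_conv:
  fixes f g :: "real \<Rightarrow> real"
  assumes a: "a > 0" and d: "\<And>t. t \<ge> 0 \<Longrightarrow> (f has_real_derivative (- a * f t + g t)) (at t within {0..})"
    and g: "(g \<longlongrightarrow> 0) at_top"
  shows "(f \<longlongrightarrow> 0) at_top"
proof (rule tendstoI)
  fix e :: real assume e: "e > 0"
  have "\<forall>\<^sub>F t in at_top. dist (g t) 0 < a * e / 2" using a e by (intro tendstoD[OF g]) auto
  then obtain T0 where T0: "\<And>t. t \<ge> T0 \<Longrightarrow> \<bar>g t\<bar> < a * e / 2"
    by (auto simp: eventually_at_top_linorder)
  define T2 where "T2 = max 0 T0"
  have T2: "T2 \<ge> 0" by (simp add: T2_def)
  have up: "f t \<le> (a * e / 2) / a + \<bar>f T2\<bar> * exp (- a * (t - T2))" if "t \<ge> T2" for t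
  proof (rule CL0[OF a T2 d _ _ that])
    fix s assume "T2 \<le> s" then have "\<bar>g s\<bar> < a * e / 2" using T0 by (auto simp: T2_def)
    then show "- a * f s + g s \<le> - a * f s + a * e / 2" by simp
  qed (use a e in auto)
  have lo: "- f t \<le> (a * e / 2) / a + \<bar>- f T2\<bar> * exp (- a * (t - T2))" if "t \<ge> T2" for t
  proof (rule CL0[where f'="\<lambda>s. - (- a * f s + g s)", OF a T2 _ _ _ that])
    fix s :: real assume "0 \<le> s"
    then show "((\<lambda>t. - f t) has_real_derivative - (- a * f s + g s)) (at s within {0..})"
      using d[of s] by (intro DERIV_minus) auto
  next
    fix s assume "T2 \<le> s" then have "\<bar>g s\<bar> < a * e / 2" using T0 by (auto simp: T2_def)
    then show "- (- a * f s + g s) \<le> - a * (- f s) + a * e / 2" by simp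
  qed (use a e in auto)
  have "\<forall>\<^sub>F t in at_top. \<bar>f T2\<bar> * exp (- a * (t - T2)) < e / 2"
    using e by (intro order_tendstoD(2)[OF exp_decay_lim[OF a]]) auto
  moreover have "\<forall>\<^sub>F t in at_top. t \<ge> T2" by (rule eventually_ge_at_top)
  ultimately show "\<forall>\<^sub>F t in at_top. dist (f t) 0 < e"
  proof eventually_elim
    case (elim t)
    have ae: "(a * e / 2) / a = e / 2" using a by simp
    have "f t < e" "- f t < e" using up[of t] lo[of t] elim ae by auto
    then show ?case by (simp add: dist_real_def abs_less_iff)
  qed
qed



lemma core:
  fixes S E I R V :: "real \<Rightarrow> real"
  assumes pars: "\<mu> > 0" "N > 0" "b > 0" "\<sigma> > 0" "\<gamma> > 0" "q \<ge> 0"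
  and dS: "\<And>t. t \<ge> 0 \<Longrightarrow> (S has_real_derivative (\<mu>*N - b*S t*I t - q*S t - \<mu>*S t)) (at t within {0..})"
  and dE: "\<And>t. t \<ge> 0 \<Longrightarrow> (E has_real_derivative (b*S t*I t - (\<sigma>+\<mu>)*E t)) (at t within {0..})"
  and dI: "\<And>t. t \<ge> 0 \<Longrightarrow> (I has_real_derivative (\<sigma>*E t - (\<gamma>+\<mu>)*I t)) (at t within {0..})"
  and dR: "\<And>t. t \<ge> 0 \<Longrightarrow> (R has_real_derivative (\<gamma>*I t - \<mu>*R t)) (at t within {0..})"
  and dV: "\<And>t. t \<ge> 0 \<Longrightarrow> (V has_real_derivative (q*S t - \<mu>*V t)) (at t within {0..})"
  and init: "S 0 \<ge> 0" "E 0 \<ge> 0" "I 0 \<ge> 0" "R 0 \<ge> 0" "V 0 \<ge> 0"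
  and sum0: "S 0 + E 0 + I 0 + R 0 + V 0 = N"
  and Ss: "Ss = \<mu>*N/(q+\<mu>)"
  and Rc: "\<sigma>*b*Ss < (\<sigma>+\<mu>)*(\<gamma>+\<mu>)"
  and c: "c = (b*Ss/(\<gamma>+\<mu>) + (\<sigma>+\<mu>)/\<sigma>)/2"
  and th: "\<theta> = (c*(\<gamma>+\<mu>) - b*Ss)/(2*b)"
  and K: "K = 2 + (1+c)*(b*N/(c*(q+\<mu>)) + 1 + 1/c + \<gamma>/(c*\<mu>))"
  shows "\<forall>t\<ge>0. S t + E t + I t + R t + V t = N"
   and "\<forall>t\<ge>0. S t \<ge> 0 \<and> E t \<ge> 0 \<and> I t \<ge> 0 \<and> R t \<ge> 0 \<and> V t \<ge> 0"
   and "\<theta> > 0" "K > 0"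
   and "\<bar>S 0 - Ss\<bar> < \<theta> \<Longrightarrow> \<forall>t\<ge>0. \<bar>S t - Ss\<bar> + E t + I t + R t \<le> K*(\<bar>S 0 - Ss\<bar> + E 0 + I 0 + R 0)"
   and "(S \<longlongrightarrow> Ss) at_top" "(E \<longlongrightarrow> 0) at_top" "(I \<longlongrightarrow> 0) at_top" "(R \<longlongrightarrow> 0) at_top"
proof -
  have pos: "S t \<ge> 0 \<and> E t \<ge> 0 \<and> I t \<ge> 0 \<and> R t \<ge> 0 \<and> V t \<ge> 0" if "t \<ge> 0" for t
    by (rule positivity[OF pars dS dE dI dR dV init that])
  then show "\<forall>t\<ge>0. S t \<ge> 0 \<and> E t \<ge> 0 \<and> I t \<ge> 0 \<and> R t \<ge> 0 \<and> V t \<ge> 0" by blast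
  define F where "F t = S t + E t + I t + R t + V t - N" for t
  have dF: "(F has_real_derivative (- \<mu> * F t)) (at t within {0..})" if "t \<ge> 0" for t
  proof -
    have "((\<lambda>t. S t + E t + I t + R t + V t - N) has_real_derivative
       ((\<mu>*N - b*S t*I t - q*S t - \<mu>*S t) + (b*S t*I t - (\<sigma>+\<mu>)*E t) + (\<sigma>*E t - (\<gamma>+\<mu>)*I t)
        + (\<gamma>*I t - \<mu>*R t) + (q*S t - \<mu>*V t) - 0)) (at t within {0..})"
      using that by (intro DERIV_diff DERIV_add dS dE dI dR dV DERIV_const)
    then show ?thesis unfolding F_def[abs_def] by (rule DERIV_cong) (simp add: algebra_simps)
  qed
  have sumN: "S t + E t + I t + R t + V t = N" if t: "t \<ge> 0" for t
  proof -
    have "F t \<le> 0 / \<mu> + \<bar>F 0\<bar> * exp (- \<mu> * (t - 0))"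
      by (rule CL0[OF pars(1) order_refl dF _ order_refl t]) auto
    moreover have "- F t \<le> 0 / \<mu> + \<bar>- F 0\<bar> * exp (- \<mu> * (t - 0))"
    proof (rule CL0[OF pars(1) order_refl _ _ order_refl t])
      fix s :: real assume "0 \<le> s"
      then show "((\<lambda>t. - F t) has_real_derivative - (- \<mu> * F s)) (at s within {0..})"
        by (intro DERIV_minus dF)
    qed auto
    moreover have "F 0 = 0" using sum0 by (simp add: F_def)
    ultimately show ?thesis by (simp add: F_def)
  qed
  then show "\<forall>t\<ge>0. S t + E t + I t + R t + V t = N" by blast
  have bnd: "S t \<le> N" "I t \<le> N" "S t \<ge> 0" "E t \<ge> 0" "I t \<ge> 0" "R t \<ge> 0" if "t \<ge> 0" for t
    using sumN[OF that] pos[OF that] by auto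
  define a where "a = q + \<mu>"
  have a: "a > 0" using pars by (simp add: a_def)
  have aSs: "a * Ss = \<mu> * N" using a by (simp add: Ss a_def)
  have Ss0: "Ss > 0" using pars by (simp add: Ss)
  have gm: "\<gamma> + \<mu> > 0" "\<sigma> + \<mu> > 0" using pars by auto
  have Rc': "b*Ss/(\<gamma>+\<mu>) < (\<sigma>+\<mu>)/\<sigma>"
    using Rc gm pars by (simp add: divide_simps) (simp add: algebra_simps)
  have c_lo: "b*Ss/(\<gamma>+\<mu>) < c" and c_hi: "c < (\<sigma>+\<mu>)/\<sigma>" proof -
    have aux: "A < B \<Longrightarrow> A < (A+B)/2 \<and> (A+B)/2 < B" for A B :: real by auto
    show "b*Ss/(\<gamma>+\<mu>) < c" "c < (\<sigma>+\<mu>)/\<sigma>" using aux[OF Rc'] unfolding c by auto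
  qed
  have c0: "c > 0" using c_lo pars Ss0 gm by (smt (verit) divide_pos_pos mult_pos_pos)
  define \<eta>1 where "\<eta>1 = (\<sigma>+\<mu>) - c*\<sigma>"
  define \<eta>2 where "\<eta>2 = (c*(\<gamma>+\<mu>) - b*Ss)/2"
  have \<eta>1: "\<eta>1 > 0" using c_hi pars by (simp add: \<eta>1_def pos_less_divide_eq mult.commute)
  have \<eta>2: "\<eta>2 > 0" using c_lo gm by (simp add: \<eta>2_def pos_divide_less_eq mult.commute)
  have b\<theta>: "b * \<theta> = \<eta>2" using pars by (simp add: th \<eta>2_def)
  show th0: "\<theta> > 0" using \<eta>2 pars by (simp add: th \<eta>2_def)
  define \<eta> where "\<eta> = min \<eta>1 \<eta>2"
  have \<eta>: "\<eta> > 0" "\<eta> \<le> \<eta>1" "\<eta> \<le> \<eta>2" using \<eta>1 \<eta>2 by (auto simp: \<eta>_def)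
  define k where "k = \<eta> / (1 + c)"
  have k: "k > 0" using \<eta> c0 by (simp add: k_def)
  define W where "W t = E t + c * I t" for t
  have W0: "W t \<ge> 0" if "t \<ge> 0" for t using bnd[OF that] c0 by (simp add: W_def)
  define W' where "W' t = (b*S t*I t - (\<sigma>+\<mu>)*E t) + c * (\<sigma>*E t - (\<gamma>+\<mu>)*I t)" for t
  have dW: "(W has_real_derivative W' t) (at t within {0..})" if "t \<ge> 0" for t
    unfolding W_def[abs_def] W'_def using that by (intro DERIV_add DERIV_cmult dE dI)
  have Wdec: "W' t \<le> - k * W t" if t: "t \<ge> 0" and St: "S t \<le> Ss + \<theta>" for t
  proof -
    have e1: "W' t = - \<eta>1 * E t + I t * (b * S t - c*(\<gamma>+\<mu>))"
      by (simp add: W'_def \<eta>1_def algebra_simps)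
    have "b * S t \<le> b * (Ss + \<theta>)" using St pars by (intro mult_left_mono) auto
    moreover have "b * (Ss + \<theta>) = b * Ss + \<eta>2" using b\<theta> by (simp add: algebra_simps)
    moreover have "c*(\<gamma>+\<mu>) = b * Ss + 2 * \<eta>2" unfolding \<eta>2_def by (simp add: field_simps)
    ultimately have "b * S t - c*(\<gamma>+\<mu>) \<le> - \<eta>2" by linarith
    then have e2: "I t * (b * S t - c*(\<gamma>+\<mu>)) \<le> I t * (- \<eta>)"
      using bnd[OF t] \<eta> by (intro mult_left_mono) auto
    have e3: "- \<eta>1 * E t \<le> - \<eta> * E t" using bnd[OF t] \<eta> by (intro mult_right_mono) auto
    have "E t + c * I t \<le> (E t + I t) * (1 + c)" using bnd[OF t] c0 by (simp add: algebra_simps)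
    then have "\<eta> * (E t + c * I t) \<le> \<eta> * ((E t + I t) * (1 + c))" using \<eta> by (intro mult_left_mono) auto
    then have e4: "k * W t \<le> \<eta> * (E t + I t)" using c0
      by (simp add: k_def W_def divide_simps)
    show ?thesis using e1 e2 e3 e4 by (simp add: algebra_simps)
  qed
  define u where "u t = S t - Ss" for t
  have du: "(u has_real_derivative (- a * u t + (- b * S t * I t))) (at t within {0..})" if "t \<ge> 0" for t
  proof -
    have "(u has_real_derivative (\<mu>*N - b*S t*I t - q*S t - \<mu>*S t) - 0) (at t within {0..})"
      unfolding u_def[abs_def] using that by (intro DERIV_diff dS DERIV_const)
    then show ?thesis by (rule DERIV_cong) (use aSs in \<open>simp add: u_def a_def algebra_simps\<close>)
  qed
  have uup: "u t \<le> \<bar>u 0\<bar> * exp (- a * t)" if t: "t \<ge> 0" for t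
  proof -
    have "u t \<le> 0 / a + \<bar>u 0\<bar> * exp (- a * (t - 0))"
    proof (rule CL0[OF a order_refl du _ order_refl t])
      fix s :: real assume "0 \<le> s"
      then have "b * S s * I s \<ge> 0" using bnd[of s] pars by simp
      then show "- a * u s + - b * S s * I s \<le> - a * u s + 0" by simp
    qed
    then show ?thesis by simp
  qed
  have KX: "K = 2 + (1+c)*(b*N/(c*a) + 1 + 1/c + \<gamma>/(c*\<mu>))" by (simp add: K a_def)
  have X0: "b*N/(c*a) + 1 + 1/c + \<gamma>/(c*\<mu>) > 0" using pars c0 a by (intro add_pos_pos) auto
  show "K > 0"
  proof -
    have "(1+c)*(b*N/(c*a) + 1 + 1/c + \<gamma>/(c*\<mu>)) > 0" using X0 c0 by (intro mult_pos_pos) auto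
    then show ?thesis unfolding KX by linarith
  qed
  show "\<bar>S 0 - Ss\<bar> < \<theta> \<Longrightarrow> \<forall>t\<ge>0. \<bar>S t - Ss\<bar> + E t + I t + R t \<le> K*(\<bar>S 0 - Ss\<bar> + E 0 + I 0 + R 0)"
  proof -
    assume u0: "\<bar>S 0 - Ss\<bar> < \<theta>"
    have Sle: "S t \<le> Ss + \<theta>" if t: "t \<ge> 0" for t
    proof -
      have "exp (- a * t) \<le> 1" using a t by simp
      then have "\<bar>u 0\<bar> * exp (- a * t) \<le> \<bar>u 0\<bar> * 1" by (intro mult_left_mono) auto
      then show ?thesis using uup[OF t] u0 by (simp add: u_def)
    qed
    define W0 where "W0 = W 0"
    have W00: "W0 \<ge> 0" using W0[of 0] by (simp add: W0_def)
    have Wb: "W t \<le> W0" if t: "t \<ge> 0" for t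
    proof -
      have "W t \<le> 0 / k + \<bar>W 0\<bar> * exp (- k * (t - 0))"
      proof (rule CL0[OF k order_refl dW _ order_refl t])
        fix s :: real assume "0 \<le> s"
        then show "W' s \<le> - k * W s + 0" using Wdec[OF _ Sle] by simp
      qed
      also have "\<dots> = \<bar>W 0\<bar> * exp (- k * t)" by simp
      also have "\<dots> \<le> \<bar>W 0\<bar> * 1" using k t by (intro mult_left_mono) auto
      finally show ?thesis using W00 by (simp add: W0_def)
    qed
    have Eb: "E t \<le> W0" and Ib: "I t \<le> W0 / c" if t: "t \<ge> 0" for t
    proof -
      have "c * I t \<ge> 0" using bnd[OF t] c0 by simp
      then show "E t \<le> W0" using Wb[OF t] by (simp add: W_def)
      have "c * I t \<le> W0" using Wb[OF t] bnd[OF t] by (simp add: W_def)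
      then show "I t \<le> W0 / c" using c0 by (simp add: pos_le_divide_eq mult.commute)
    qed
    define G where "G = b * N * (W0 / c)"
    have G0: "G \<ge> 0" using pars W00 c0 by (simp add: G_def)
    have ulo: "- u t \<le> G / a + \<bar>u 0\<bar>" if t: "t \<ge> 0" for t
    proof -
      have "- u t \<le> G / a + \<bar>- u 0\<bar> * exp (- a * (t - 0))"
      proof (rule CL0[where f'="\<lambda>s. - (- a * u s + (- b * S s * I s))", OF a order_refl _ _ G0 t])
        fix s :: real assume s: "0 \<le> s"
        then show "((\<lambda>t. - u t) has_real_derivative - (- a * u s + (- b * S s * I s))) (at s within {0..})"
          by (intro DERIV_minus du)
        have "S s * I s \<le> N * (W0 / c)" using bnd[OF s] Ib[OF s] pars by (intro mult_mono) auto
        then have "b * (S s * I s) \<le> b * (N * (W0 / c))" using pars by (intro mult_left_mono) auto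
        then show "- (- a * u s + (- b * S s * I s)) \<le> - a * (- u s) + G" by (simp add: G_def algebra_simps)
      qed
      also have "\<bar>- u 0\<bar> * exp (- a * (t - 0)) = \<bar>u 0\<bar> * exp (- a * t)" by simp
      also have "\<dots> \<le> \<bar>u 0\<bar> * 1" using a t by (intro mult_left_mono) auto
      finally show ?thesis by simp
    qed
    have Rb: "R t \<le> \<gamma> * (W0 / c) / \<mu> + R 0" if t: "t \<ge> 0" for t
    proof -
      have "R t \<le> \<gamma> * (W0 / c) / \<mu> + \<bar>R 0\<bar> * exp (- \<mu> * (t - 0))"
      proof (rule CL0[OF pars(1) order_refl dR _ _ t])
        fix s :: real assume s: "0 \<le> s"
        have "\<gamma> * I s \<le> \<gamma> * (W0 / c)" using Ib[OF s] pars by (intro mult_left_mono) auto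
        then show "\<gamma> * I s - \<mu> * R s \<le> - \<mu> * R s + \<gamma> * (W0 / c)" by simp
      next
        show "0 \<le> \<gamma> * (W0 / c)" using pars W00 c0 by (intro mult_nonneg_nonneg divide_nonneg_pos) auto
      qed
      also have "\<bar>R 0\<bar> * exp (- \<mu> * (t - 0)) = \<bar>R 0\<bar> * exp (- \<mu> * t)" by simp
      also have "\<dots> \<le> \<bar>R 0\<bar> * 1" using pars t by (intro mult_left_mono) auto
      finally show ?thesis using init by simp
    qed
    define X where "X = b*N/(c*a) + 1 + 1/c + \<gamma>/(c*\<mu>)"
    define \<delta>0 where "\<delta>0 = \<bar>S 0 - Ss\<bar> + E 0 + I 0 + R 0"
    have WX: "G / a + W0 + W0 / c + \<gamma> * (W0 / c) / \<mu> = W0 * X"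
      using a c0 pars by (simp add: X_def G_def field_simps)
    have W0d: "W0 \<le> (1 + c) * (E 0 + I 0)" using init c0 by (simp add: W0_def W_def algebra_simps)
    have "W0 * X \<le> ((1 + c) * \<delta>0) * X"
    proof (rule mult_right_mono)
      have "(1 + c) * (E 0 + I 0) \<le> (1 + c) * \<delta>0" using c0 init by (intro mult_left_mono) (auto simp: \<delta>0_def)
      then show "W0 \<le> (1 + c) * \<delta>0" using W0d by linarith
    qed (use X0 in \<open>simp add: X_def\<close>)
    moreover have "K * \<delta>0 = 2 * \<delta>0 + ((1 + c) * \<delta>0) * X" using c0 a pars by (simp add: KX X_def field_simps)
    moreover have "\<delta>0 \<ge> 0" using init by (simp add: \<delta>0_def)
    ultimately have fin: "\<bar>S 0 - Ss\<bar> + R 0 + W0 * X \<le> K * \<delta>0" using init by (simp add: \<delta>0_def)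
    show ?thesis
    proof (intro allI impI)
      fix t :: real assume t: "t \<ge> 0"
      have "\<bar>S t - Ss\<bar> \<le> \<bar>S 0 - Ss\<bar> + G / a"
      proof -
        have e: "\<bar>u 0\<bar> * exp (- a * t) \<le> \<bar>u 0\<bar> * 1" using a t by (intro mult_left_mono) auto
        have "G / a \<ge> 0" using G0 a by simp
        then have "u t \<le> \<bar>u 0\<bar> + G / a" "- u t \<le> \<bar>u 0\<bar> + G / a" using uup[OF t] ulo[OF t] e by linarith+
        then show ?thesis unfolding abs_le_iff u_def by simp
      qed
      then show "\<bar>S t - Ss\<bar> + E t + I t + R t \<le> K * (\<bar>S 0 - Ss\<bar> + E 0 + I 0 + R 0)"
        using Eb[OF t] Ib[OF t] Rb[OF t] WX fin unfolding \<delta>0_def by linarith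
    qed
  qed
  define y where "y = \<bar>u 0\<bar> / \<theta> + 1"
  have y: "y \<ge> 1" using th0 by (simp add: y_def)
  define T1 where "T1 = ln y / a"
  have T1: "T1 \<ge> 0" using y a by (simp add: T1_def)
  have SleT: "S t \<le> Ss + \<theta>" if t: "t \<ge> T1" for t
  proof -
    have "exp (- a * t) \<le> exp (- a * T1)" using t a by simp
    then have "\<bar>u 0\<bar> * exp (- a * t) \<le> \<bar>u 0\<bar> * exp (- a * T1)" by (intro mult_left_mono) auto
    moreover have "exp (- a * T1) = 1 / y" using a y by (simp add: T1_def exp_minus inverse_eq_divide)
    moreover have "\<bar>u 0\<bar> / y \<le> \<theta>" using y th0 by (simp add: y_def divide_simps)
    ultimately show ?thesis using uup[of t] t T1 by (simp add: u_def)
  qed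
  have WT: "W t \<le> \<bar>W T1\<bar> * exp (- k * (t - T1))" if t: "t \<ge> T1" for t
  proof -
    have "W t \<le> 0 / k + \<bar>W T1\<bar> * exp (- k * (t - T1))"
    proof (rule CL0[OF k T1 dW _ _ t])
      fix s :: real assume "T1 \<le> s"
      then show "W' s \<le> - k * W s + 0" using Wdec[OF _ SleT] T1 by simp
    qed auto
    then show ?thesis by simp
  qed
  have Wlim: "(W \<longlongrightarrow> 0) at_top"
  proof (rule tendsto_sandwich[OF _ _ tendsto_const exp_decay_lim[OF k, of "\<bar>W T1\<bar>" T1]])
    show "\<forall>\<^sub>F t in at_top. 0 \<le> W t" using eventually_ge_at_top[of 0] by eventually_elim (rule W0)
    show "\<forall>\<^sub>F t in at_top. W t \<le> \<bar>W T1\<bar> * exp (- k * (t - T1))"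
      using eventually_ge_at_top[of T1] by eventually_elim (rule WT)
  qed
  show Elim: "(E \<longlongrightarrow> 0) at_top"
  proof (rule tendsto_sandwich[OF _ _ tendsto_const Wlim])
    show "\<forall>\<^sub>F t in at_top. 0 \<le> E t" using eventually_ge_at_top[of 0] by eventually_elim (use bnd in auto)
    show "\<forall>\<^sub>F t in at_top. E t \<le> W t"
      using eventually_ge_at_top[of 0] by eventually_elim (use bnd c0 in \<open>auto simp: W_def\<close>)
  qed
  show Ilim: "(I \<longlongrightarrow> 0) at_top"
  proof (rule tendsto_sandwich[OF _ _ tendsto_const tendsto_divide_zero[OF Wlim, of c]])
    show "\<forall>\<^sub>F t in at_top. 0 \<le> I t" using eventually_ge_at_top[of 0] by eventually_elim (use bnd in auto)
    show "\<forall>\<^sub>F t in at_top. I t \<le> W t / c"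
      using eventually_ge_at_top[of 0] by eventually_elim (use bnd c0 in \<open>auto simp: W_def pos_le_divide_eq\<close>)
  qed
  have glim: "((\<lambda>t. - b * S t * I t) \<longlongrightarrow> 0) at_top"
  proof (rule tendsto_sandwich[OF _ _ tendsto_mult_right_zero[OF Ilim, of "- (b * N)"] tendsto_const])
    show "\<forall>\<^sub>F t in at_top. - (b * N) * I t \<le> - b * S t * I t"
      using eventually_ge_at_top[of 0]
    proof eventually_elim
      case (elim t)
      have "S t * I t \<le> N * I t" using bnd[OF elim] by (intro mult_right_mono) auto
      then have "b * (S t * I t) \<le> b * (N * I t)" using pars by (intro mult_left_mono) auto
      then show ?case by (simp add: algebra_simps)
    qed
    show "\<forall>\<^sub>F t in at_top. - b * S t * I t \<le> 0"
      using eventually_ge_at_top[of 0] by eventually_elim (use bnd pars in auto)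
  qed
  have "(u \<longlongrightarrow> 0) at_top" by (rule lin_conv[OF a du glim])
  then show "(S \<longlongrightarrow> Ss) at_top" unfolding u_def[abs_def] by (simp add: LIM_zero_iff)
  have dR': "(R has_real_derivative (- \<mu> * R t + \<gamma> * I t)) (at t within {0..})" if "t \<ge> 0" for t
    using dR[OF that] by (rule DERIV_cong) simp
  show "(R \<longlongrightarrow> 0) at_top"
    by (rule lin_conv[OF pars(1) dR' tendsto_mult_right_zero[OF Ilim]])
qed



lemma dist_Pair_le:
  fixes a c :: "'a::real_normed_vector" and b d :: "'b::real_normed_vector"
  shows "dist (a, b) (c, d) \<le> dist a c + dist b d"
proof -
  have "dist (a, b) (c, d) = norm (a - c, b - d)" by (simp add: dist_norm)
  also have "\<dots> \<le> norm (a - c) + norm (b - d)" by (rule norm_Pair_le)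
  finally show ?thesis by (simp add: dist_norm)
qed

lemma dist5_le:
  fixes a1 a2 a3 a4 a5 b1 b2 b3 b4 b5 :: real
  shows "dist (a1,a2,a3,a4,a5) (b1,b2,b3,b4,b5) \<le> \<bar>a1-b1\<bar> + \<bar>a2-b2\<bar> + \<bar>a3-b3\<bar> + \<bar>a4-b4\<bar> + \<bar>a5-b5\<bar>"
proof -
  have "dist (a1,a2,a3,a4,a5) (b1,b2,b3,b4,b5) \<le> dist a1 b1 + dist (a2,a3,a4,a5) (b2,b3,b4,b5)" by (rule dist_Pair_le)
  also have "dist (a2,a3,a4,a5) (b2,b3,b4,b5) \<le> dist a2 b2 + dist (a3,a4,a5) (b3,b4,b5)" by (rule dist_Pair_le)
  also have "dist (a3,a4,a5) (b3,b4,b5) \<le> dist a3 b3 + dist (a4,a5) (b4,b5)" by (rule dist_Pair_le)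
  also have "dist (a4,a5) (b4,b5) \<le> dist a4 b4 + dist a5 b5" by (rule dist_Pair_le)
  finally show ?thesis by (simp add: dist_real_def add.assoc)
qed

lemma dist5_ge:
  fixes a b c d e k l m n w :: real
  shows "\<bar>a-k\<bar> \<le> dist (a,b,c,d,e) (k,l,m,n,w) \<and> \<bar>b-l\<bar> \<le> dist (a,b,c,d,e) (k,l,m,n,w)
    \<and> \<bar>c-m\<bar> \<le> dist (a,b,c,d,e) (k,l,m,n,w) \<and> \<bar>d-n\<bar> \<le> dist (a,b,c,d,e) (k,l,m,n,w)"
proof -
  let ?x = "(a,b,c,d,e)" and ?y = "(k,l,m,n,w)"
  have "\<bar>a-k\<bar> \<le> dist ?x ?y" using dist_fst_le[of ?x ?y] by (simp add: dist_real_def)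
  moreover have "\<bar>b-l\<bar> \<le> dist ?x ?y" using dist_fst_le[of "snd ?x" "snd ?y"] dist_snd_le[of ?x ?y] by (simp add: dist_real_def)
  moreover have "\<bar>c-m\<bar> \<le> dist ?x ?y" using dist_fst_le[of "snd (snd ?x)" "snd (snd ?y)"] dist_snd_le[of "snd ?x" "snd ?y"] dist_snd_le[of ?x ?y] by (simp add: dist_real_def)
  moreover have "\<bar>d-n\<bar> \<le> dist ?x ?y" using dist_fst_le[of "snd (snd (snd ?x))" "snd (snd (snd ?y))"] dist_snd_le[of "snd (snd ?x)" "snd (snd ?y)"] dist_snd_le[of "snd ?x" "snd ?y"] dist_snd_le[of ?x ?y] by (simp add: dist_real_def)
  ultimately show ?thesis by blast
qed

lemma sol_derivs:
  fixes x :: "real \<Rightarrow> state"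
  assumes sol: "seirv_solution \<mu> \<beta> \<sigma> \<gamma> \<rho> N p x" and t: "t \<ge> 0" and N: "N \<noteq> 0"
    and defs: "S = (\<lambda>t. fst (x t))" "E = (\<lambda>t. fst (snd (x t)))" "I = (\<lambda>t. fst (snd (snd (x t))))"
      "R = (\<lambda>t. fst (snd (snd (snd (x t)))))" "V = (\<lambda>t. snd (snd (snd (snd (x t)))))"
    and b: "b = \<beta> * (1 - \<rho>) / N" and q: "q = p / N"
  shows "(S has_real_derivative (\<mu>*N - b*S t*I t - q*S t - \<mu>*S t)) (at t within {0..})"
    "(E has_real_derivative (b*S t*I t - (\<sigma>+\<mu>)*E t)) (at t within {0..})"
    "(I has_real_derivative (\<sigma>*E t - (\<gamma>+\<mu>)*I t)) (at t within {0..})"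
    "(R has_real_derivative (\<gamma>*I t - \<mu>*R t)) (at t within {0..})"
    "(V has_real_derivative (q*S t - \<mu>*V t)) (at t within {0..})"
proof -
  have xt: "x t = (S t, E t, I t, R t, V t)" by (simp add: defs)
  have D: "(x has_vector_derivative
      (\<mu> * N - \<beta> / N * S t * (1 - \<rho>) * I t - S t / N * p - \<mu> * S t,
       \<beta> / N * S t * (1 - \<rho>) * I t - \<sigma> * E t - \<mu> * E t,
       \<sigma> * E t - \<gamma> * I t - \<mu> * I t,
       \<gamma> * I t - \<mu> * R t,
       S t / N * p - \<mu> * V t)) (at t within {0..})"
  proof -
    have "(x has_vector_derivative seirv_rhs \<mu> \<beta> \<sigma> \<gamma> \<rho> N p (x t)) (at t within {0..})"
      using sol t by (simp add: seirv_solution_def)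
    then show ?thesis by (simp add: seirv_rhs_def xt)
  qed
  note C = vd_comps[OF D, folded defs]
  show "(S has_real_derivative (\<mu>*N - b*S t*I t - q*S t - \<mu>*S t)) (at t within {0..})"
    using C(1) by (rule DERIV_cong) (simp add: b q field_simps)
  show "(E has_real_derivative (b*S t*I t - (\<sigma>+\<mu>)*E t)) (at t within {0..})"
    using C(2) by (rule DERIV_cong) (simp add: b q field_simps)
  show "(I has_real_derivative (\<sigma>*E t - (\<gamma>+\<mu>)*I t)) (at t within {0..})"
    using C(3) by (rule DERIV_cong) (simp add: b q field_simps)
  show "(R has_real_derivative (\<gamma>*I t - \<mu>*R t)) (at t within {0..})"
    using C(4) by (rule DERIV_cong) (simp add: b q field_simps)
  show "(V has_real_derivative (q*S t - \<mu>*V t)) (at t within {0..})"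
    using C(5) by (rule DERIV_cong) (simp add: b q field_simps)
qed

theorem mainTheorem8:
  fixes \<mu> \<beta> \<sigma> \<gamma> \<rho> N \<Delta>1 \<Delta>2 \<pi>1 \<pi>2 :: real
  defines "p \<equiv> vacc_p \<Delta>1 \<Delta>2 \<pi>1 \<pi>2"
  assumes "\<mu> > 0" "N > 0" "\<beta> > 0" "\<sigma> > 0" "\<gamma> > 0" "0 < \<rho>" "\<rho> < 1"
      and "\<Delta>1 \<ge> 0" "\<Delta>2 \<ge> 0" "p \<ge> 0"
      and "R0 \<mu> \<beta> \<sigma> \<gamma> \<rho> N p < 1"
  shows "(\<forall>\<epsilon>>0. \<exists>\<delta>>0. \<forall>x. seirv_solution \<mu> \<beta> \<sigma> \<gamma> \<rho> N p x \<and> x 0 \<in> Sigma_set N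
              \<and> dist (x 0) (DFE \<mu> N p) < \<delta> \<longrightarrow> (\<forall>t\<ge>0. dist (x t) (DFE \<mu> N p) < \<epsilon>))
       \<and> (\<forall>x. seirv_solution \<mu> \<beta> \<sigma> \<gamma> \<rho> N p x \<and> x 0 \<in> Sigma_set N
              \<longrightarrow> (x \<longlongrightarrow> DFE \<mu> N p) at_top)"
proof -
  note A = assms(2-)
  define b where "b = \<beta> * (1 - \<rho>) / N"
  define q where "q = p / N"
  define Ss where "Ss = \<mu>*N/(q+\<mu>)"
  define c where "c = (b*Ss/(\<gamma>+\<mu>) + (\<sigma>+\<mu>)/\<sigma>)/2"
  define \<theta> where "\<theta> = (c*(\<gamma>+\<mu>) - b*Ss)/(2*b)"
  define K where "K = 2 + (1+c)*(b*N/(c*(q+\<mu>)) + 1 + 1/c + \<gamma>/(c*\<mu>))"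
  have b0: "b > 0" using A by (simp add: b_def)
  have q0: "q \<ge> 0" using A by (simp add: q_def)
  have pars: "\<mu> > 0" "N > 0" "b > 0" "\<sigma> > 0" "\<gamma> > 0" "q \<ge> 0" using A b0 q0 by auto
  have pmu: "p + \<mu> * N > 0" using A by (simp add: add_nonneg_pos)
  have DFE: "DFE \<mu> N p = (Ss, 0, 0, 0, N - Ss)"
    using A pmu by (simp add: DFE_def Ss_def q_def field_simps power2_eq_square)
  have Rc: "\<sigma>*b*Ss < (\<sigma>+\<mu>)*(\<gamma>+\<mu>)"
  proof -
    have nz: "\<sigma>+\<mu> \<noteq> 0" "\<gamma>+\<mu> \<noteq> 0" "p+\<mu>*N \<noteq> 0" "N \<noteq> 0" "p/N + \<mu> \<noteq> 0"
    proof -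
      have "p/N + \<mu> > 0" using A by (simp add: add_nonneg_pos)
      then show "\<sigma>+\<mu> \<noteq> 0" "\<gamma>+\<mu> \<noteq> 0" "p+\<mu>*N \<noteq> 0" "N \<noteq> 0" "p/N + \<mu> \<noteq> 0"
        using A pmu by auto
    qed
    have Ss': "Ss = \<mu>*N*N/(p+\<mu>*N)" using nz by (simp add: Ss_def q_def field_simps)
    have gen: "\<sigma>*(\<beta>*(1-\<rho>)/N)*(\<mu>*N*N/D) = \<sigma>*\<beta>*(1-\<rho>)*\<mu>*N/D" if "D \<noteq> 0" for D
      using nz that by (simp add: field_simps)
    have "\<sigma>*b*Ss = \<sigma>*\<beta>*(1-\<rho>)*\<mu>*N/(p+\<mu>*N)" unfolding Ss' b_def by (rule gen[OF nz(3)])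
    also have "\<dots> = R0 \<mu> \<beta> \<sigma> \<gamma> \<rho> N p * ((\<sigma>+\<mu>)*(\<gamma>+\<mu>))"
    proof -
      have gen2: "Z/(P*Q*D)*(P*Q) = Z/D" if "P \<noteq> 0" "Q \<noteq> 0" "D \<noteq> 0" for Z P Q D :: real
        using that by (simp add: field_simps)
      show ?thesis unfolding R0_def gen2[OF nz(1,2,3)] by (simp add: mult_ac)
    qed
    finally have "\<sigma>*b*Ss = R0 \<mu> \<beta> \<sigma> \<gamma> \<rho> N p * ((\<sigma>+\<mu>)*(\<gamma>+\<mu>))" .
    also have "\<dots> < 1 * ((\<sigma>+\<mu>)*(\<gamma>+\<mu>))" using A by (intro mult_strict_right_mono) auto
    finally show ?thesis by simp
  qed
  have CORE: "\<forall>t\<ge>0. fst (x t) + fst (snd (x t)) + fst (snd (snd (x t))) + fst (snd (snd (snd (x t)))) + snd (snd (snd (snd (x t)))) = N"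
     "\<bar>fst (x 0) - Ss\<bar> < \<theta> \<Longrightarrow> (\<forall>t\<ge>0. \<bar>fst (x t) - Ss\<bar> + fst (snd (x t)) + fst (snd (snd (x t))) + fst (snd (snd (snd (x t))))
           \<le> K*(\<bar>fst (x 0) - Ss\<bar> + fst (snd (x 0)) + fst (snd (snd (x 0))) + fst (snd (snd (snd (x 0))))))"
     "\<forall>t\<ge>0. fst (x t) \<ge> 0 \<and> fst (snd (x t)) \<ge> 0 \<and> fst (snd (snd (x t))) \<ge> 0 \<and> fst (snd (snd (snd (x t)))) \<ge> 0 \<and> snd (snd (snd (snd (x t)))) \<ge> 0"
     "((\<lambda>t. fst (x t)) \<longlongrightarrow> Ss) at_top" "((\<lambda>t. fst (snd (x t))) \<longlongrightarrow> 0) at_top"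
     "((\<lambda>t. fst (snd (snd (x t)))) \<longlongrightarrow> 0) at_top" "((\<lambda>t. fst (snd (snd (snd (x t))))) \<longlongrightarrow> 0) at_top"
    if sol: "seirv_solution \<mu> \<beta> \<sigma> \<gamma> \<rho> N p x" and x0: "x 0 \<in> Sigma_set N" for x
  proof -
    define S where "S = (\<lambda>t. fst (x t))"
    define E where "E = (\<lambda>t. fst (snd (x t)))"
    define I where "I = (\<lambda>t. fst (snd (snd (x t))))"
    define R where "R = (\<lambda>t. fst (snd (snd (snd (x t)))))"
    define V where "V = (\<lambda>t. snd (snd (snd (snd (x t)))))"
    have N0: "N \<noteq> 0" using A by simp
    note D = sol_derivs[OF sol _ N0 S_def E_def I_def R_def V_def b_def q_def]
    have x0': "x 0 = (S 0, E 0, I 0, R 0, V 0)" by (simp add: S_def E_def I_def R_def V_def)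
    have init: "S 0 \<ge> 0" "E 0 \<ge> 0" "I 0 \<ge> 0" "R 0 \<ge> 0" "V 0 \<ge> 0" "S 0 + E 0 + I 0 + R 0 + V 0 = N"
      using x0 unfolding x0' Sigma_set_def by auto
    note C = core[OF pars D(1) D(2) D(3) D(4) D(5) init Ss_def Rc c_def \<theta>_def K_def, unfolded S_def E_def I_def R_def V_def]
    show "\<forall>t\<ge>0. fst (x t) + fst (snd (x t)) + fst (snd (snd (x t))) + fst (snd (snd (snd (x t)))) + snd (snd (snd (snd (x t)))) = N"
      by (rule C(1))
    show "\<forall>t\<ge>0. fst (x t) \<ge> 0 \<and> fst (snd (x t)) \<ge> 0 \<and> fst (snd (snd (x t))) \<ge> 0 \<and> fst (snd (snd (snd (x t)))) \<ge> 0 \<and> snd (snd (snd (snd (x t)))) \<ge> 0"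
      by (rule C(2))
    show "\<bar>fst (x 0) - Ss\<bar> < \<theta> \<Longrightarrow> (\<forall>t\<ge>0. \<bar>fst (x t) - Ss\<bar> + fst (snd (x t)) + fst (snd (snd (x t))) + fst (snd (snd (snd (x t))))
           \<le> K*(\<bar>fst (x 0) - Ss\<bar> + fst (snd (x 0)) + fst (snd (snd (x 0))) + fst (snd (snd (snd (x 0))))))"
      by (rule C(5))
    show "((\<lambda>t. fst (x t)) \<longlongrightarrow> Ss) at_top" by (rule C(6))
    show "((\<lambda>t. fst (snd (x t))) \<longlongrightarrow> 0) at_top" by (rule C(7))
    show "((\<lambda>t. fst (snd (snd (x t)))) \<longlongrightarrow> 0) at_top" by (rule C(8))
    show "((\<lambda>t. fst (snd (snd (snd (x t))))) \<longlongrightarrow> 0) at_top" by (rule C(9))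
  qed
  show ?thesis
  proof
    show "\<forall>\<epsilon>>0. \<exists>\<delta>>0. \<forall>x. seirv_solution \<mu> \<beta> \<sigma> \<gamma> \<rho> N p x \<and> x 0 \<in> Sigma_set N
              \<and> dist (x 0) (DFE \<mu> N p) < \<delta> \<longrightarrow> (\<forall>t\<ge>0. dist (x t) (DFE \<mu> N p) < \<epsilon>)"
    proof (intro allI impI)
      fix \<epsilon> :: real assume e: "\<epsilon> > 0"
      have gm: "\<gamma> + \<mu> > 0" "\<sigma> + \<mu> > 0" using pars by auto
      have Ss0: "Ss > 0" using pars by (simp add: Ss_def)
      have Rc': "b*Ss/(\<gamma>+\<mu>) < (\<sigma>+\<mu>)/\<sigma>"
        using Rc gm pars by (simp add: divide_simps) (simp add: algebra_simps)
      have c_lo: "b*Ss/(\<gamma>+\<mu>) < c" and c_hi: "c < (\<sigma>+\<mu>)/\<sigma>"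
      proof -
        have aux: "A < B \<Longrightarrow> A < (A+B)/2 \<and> (A+B)/2 < B" for A B :: real by auto
        show "b*Ss/(\<gamma>+\<mu>) < c" "c < (\<sigma>+\<mu>)/\<sigma>" using aux[OF Rc'] unfolding c_def by auto
      qed
      have c0: "c > 0" using c_lo pars Ss0 gm by (smt (verit) divide_pos_pos mult_pos_pos)
      have "c*(\<gamma>+\<mu>) > b*Ss" using c_lo gm by (simp add: pos_divide_less_eq mult.commute)
      then have th0: "\<theta> > 0" using pars by (simp add: \<theta>_def)
      have X0: "b*N/(c*(q+\<mu>)) + 1 + 1/c + \<gamma>/(c*\<mu>) > 0" using pars c0 by (intro add_pos_pos) auto
      have K0: "K > 0"
      proof -
        have "(1+c)*(b*N/(c*(q+\<mu>)) + 1 + 1/c + \<gamma>/(c*\<mu>)) > 0" using X0 c0 by (intro mult_pos_pos) auto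
        then show ?thesis unfolding K_def by linarith
      qed
      define \<delta> where "\<delta> = min \<theta> (\<epsilon> / (8 * K))"
      have d0: "\<delta> > 0" using th0 K0 e by (simp add: \<delta>_def)
      show "\<exists>\<delta>>0. \<forall>x. seirv_solution \<mu> \<beta> \<sigma> \<gamma> \<rho> N p x \<and> x 0 \<in> Sigma_set N
              \<and> dist (x 0) (DFE \<mu> N p) < \<delta> \<longrightarrow> (\<forall>t\<ge>0. dist (x t) (DFE \<mu> N p) < \<epsilon>)"
      proof (rule exI[of _ \<delta>], intro conjI allI impI d0)
        fix x :: "real \<Rightarrow> state" and t :: real assume H: "seirv_solution \<mu> \<beta> \<sigma> \<gamma> \<rho> N p x \<and> x 0 \<in> Sigma_set N \<and> dist (x 0) (DFE \<mu> N p) < \<delta>"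
          and t: "0 \<le> t"
        have sol: "seirv_solution \<mu> \<beta> \<sigma> \<gamma> \<rho> N p x" and xS: "x 0 \<in> Sigma_set N" using H by auto
        note C = CORE[OF sol xS]
        obtain s0 e0 i0 r0 v0 where x0: "x 0 = (s0, e0, i0, r0, v0)" using prod_cases5 by blast
        obtain s e i r v where xt: "x t = (s, e, i, r, v)" using prod_cases5 by blast
        have dd: "dist (s0, e0, i0, r0, v0) (Ss, 0, 0, 0, N - Ss) < \<delta>" using H x0 DFE by simp
        have g: "\<bar>s0 - Ss\<bar> \<le> dist (s0, e0, i0, r0, v0) (Ss, 0, 0, 0, N - Ss)" "\<bar>e0 - 0\<bar> \<le> dist (s0, e0, i0, r0, v0) (Ss, 0, 0, 0, N - Ss)"
          "\<bar>i0 - 0\<bar> \<le> dist (s0, e0, i0, r0, v0) (Ss, 0, 0, 0, N - Ss)" "\<bar>r0 - 0\<bar> \<le> dist (s0, e0, i0, r0, v0) (Ss, 0, 0, 0, N - Ss)"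
          using dist5_ge[where a=s0 and b=e0 and c=i0 and d=r0 and e=v0 and k=Ss and l=0 and m=0 and n=0 and w="N - Ss"] by blast+
        have nn0: "e0 \<ge> 0" "i0 \<ge> 0" "r0 \<ge> 0" using C(3)[rule_format, of 0] x0 by auto
        have u0: "\<bar>s0 - Ss\<bar> < \<theta>" using g(1) dd by (simp add: \<delta>_def)
        have "\<bar>s0 - Ss\<bar> + e0 + i0 + r0 < 4 * \<delta>" using g dd nn0 by simp
        then have "K * (\<bar>s0 - Ss\<bar> + e0 + i0 + r0) < K * (4 * \<delta>)" using K0 by simp
        also have "K * (4 * \<delta>) \<le> \<epsilon> / 2" using K0 by (simp add: \<delta>_def min_def field_simps)
        finally have small: "K * (\<bar>s0 - Ss\<bar> + e0 + i0 + r0) < \<epsilon> / 2" .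
        have At: "\<bar>s - Ss\<bar> + e + i + r \<le> K * (\<bar>s0 - Ss\<bar> + e0 + i0 + r0)"
          using C(2)[of, unfolded x0, simplified, OF u0, rule_format, OF t] xt by simp
        have sumt: "s + e + i + r + v = N" using C(1)[rule_format, OF t] xt by simp
        have nnt: "e \<ge> 0" "i \<ge> 0" "r \<ge> 0" using C(3)[rule_format, OF t] xt by auto
        have "dist (s, e, i, r, v) (Ss, 0, 0, 0, N - Ss) \<le> \<bar>s-Ss\<bar> + \<bar>e-0\<bar> + \<bar>i-0\<bar> + \<bar>r-0\<bar> + \<bar>v-(N - Ss)\<bar>"
          by (rule dist5_le)
        also have "\<dots> \<le> 2 * (\<bar>s - Ss\<bar> + e + i + r)" using sumt nnt by simp
        finally show "dist (x t) (DFE \<mu> N p) < \<epsilon>" using At small xt DFE by simp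
      qed
    qed
    show "\<forall>x. seirv_solution \<mu> \<beta> \<sigma> \<gamma> \<rho> N p x \<and> x 0 \<in> Sigma_set N
              \<longrightarrow> (x \<longlongrightarrow> DFE \<mu> N p) at_top"
    proof (intro allI impI)
      fix x assume H: "seirv_solution \<mu> \<beta> \<sigma> \<gamma> \<rho> N p x \<and> x 0 \<in> Sigma_set N"
      have sol: "seirv_solution \<mu> \<beta> \<sigma> \<gamma> \<rho> N p x" and xS: "x 0 \<in> Sigma_set N" using H by auto
      note C = CORE[OF sol xS]
      have V: "((\<lambda>t. N - fst (x t) - fst (snd (x t)) - fst (snd (snd (x t))) - fst (snd (snd (snd (x t)))))
          \<longlongrightarrow> N - Ss - 0 - 0 - 0) at_top"
        by (intro tendsto_diff C(4-7) tendsto_const)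
      have "\<forall>\<^sub>F t in at_top. N - fst (x t) - fst (snd (x t)) - fst (snd (snd (x t))) - fst (snd (snd (snd (x t))))
          = snd (snd (snd (snd (x t))))"
        using eventually_ge_at_top[of 0]
      proof eventually_elim
        case (elim t) then show ?case using C(1) by (simp add: algebra_simps)
      qed
      with V have V': "((\<lambda>t. snd (snd (snd (snd (x t))))) \<longlongrightarrow> N - Ss) at_top"
        by (simp add: tendsto_cong)
      have "((\<lambda>t. (fst (x t), fst (snd (x t)), fst (snd (snd (x t))), fst (snd (snd (snd (x t)))), snd (snd (snd (snd (x t))))))
          \<longlongrightarrow> (Ss, 0, 0, 0, N - Ss)) at_top"
        by (intro tendsto_Pair C(4-7) V')
      then show "(x \<longlongrightarrow> DFE \<mu> N p) at_top" by (simp add: DFE)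
    qed
  qed
qed


end
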